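(* For any metric space $X$, $\operatorname{tHD}(X)=0$ if and only if there is no Lipschitz map from $X$ onto a non-degenerate closed interval of $\mathbb{R}$.
   Context: For a metric space $X$, the transfinite Hausdorff dimension is $\operatorname{tHD}(X)=\sup\{\operatorname{trind} f(Y): Y\subset X,\ f:Y\to Z \text{ Lipschitz},\ Z \text{ a metric space}\}$, where $\operatorname{trind}$ denotes the transfinite small inductive (topological) dimension. *)

theory Defs
  imports "HOL-Analysis.Analysis"
begin

text \<open>Finite levels of the (transfinite) small inductive dimension.
  ind_le_shift T k means trind T \<le> k - 1, i.e. ind_le_shift T 0 means trind T = -1
  (the space is empty), and trind T \<le> k holds iff every point has arbitrarily small
  open neighbourhoods whose boundary has trind \<le> k - 1.  On finite ordinals
  the transfinite small inductive dimension coincides with this recursion.\<close>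
fun ind_le_shift :: "'a topology \<Rightarrow> nat \<Rightarrow> bool" where
  "ind_le_shift T 0 \<longleftrightarrow> topspace T = {}"
| "ind_le_shift T (Suc k) \<longleftrightarrow>
     (\<forall>x \<in> topspace T. \<forall>U. openin T U \<and> x \<in> U \<longrightarrow>
        (\<exists>V. openin T V \<and> x \<in> V \<and> V \<subseteq> U \<and>
             ind_le_shift (subtopology T (T frontier_of V)) k))"

definition trind_le_zero :: "'a topology \<Rightarrow> bool" where
  "trind_le_zero T \<longleftrightarrow> ind_le_shift T 1"

definition trind_eq_zero :: "'a topology \<Rightarrow> bool" where
  "trind_eq_zero T \<longleftrightarrow> trind_le_zero T \<and> \<not> ind_le_shift T 0"

text \<open>tHD(X) = 0: the supremum of trind f(Y), over Y \<subseteq> X and Lipschitz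
  f : Y \<rightarrow> Z into a metric space Z, equals 0; i.e. every such value is \<le> 0
  and the value 0 is attained.  Since |f(Y)| \<le> |X|, every such image is
  isometric to a metric space whose carrier lies in the same type as X, so
  quantifying over metrics Z :: 'a metric loses no generality.\<close>
definition tHD_eq_zero :: "'a metric \<Rightarrow> bool" where
  "tHD_eq_zero X \<longleftrightarrow>
     (\<forall>Y (Z :: 'a metric) (f :: 'a \<Rightarrow> 'a). Y \<subseteq> mspace X \<and> Lipschitz_continuous_map (submetric X Y) Z f \<longrightarrow>
        trind_le_zero (subtopology (mtopology_of Z) (f ` Y)))
   \<and> (\<exists>Y (Z :: 'a metric) (f :: 'a \<Rightarrow> 'a). Y \<subseteq> mspace X \<and> Lipschitz_continuous_map (submetric X Y) Z f \<and>
        trind_eq_zero (subtopology (mtopology_of Z) (f ` Y)))"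

end

theory Submission
  imports Defs
begin

lemma part2:
  fixes X :: "'a metric" and f :: "'a \<Rightarrow> real"
  assumes ab: "a < b" and L: "Lipschitz_continuous_map X euclidean_metric f"
    and im: "f ` mspace X = {a..b}"
  shows "\<not> tHD_eq_zero X"
proof
  assume H: "tHD_eq_zero X"
  define h where "h = inv_into (mspace X) f"
  have fh: "f (h t) = t" if "t \<in> {a..b}" for t
    using that im by (metis f_inv_into_f h_def)
  have hX: "h t \<in> mspace X" if "t \<in> {a..b}" for t
    using that im by (metis h_def inv_into_into)
  define M where "M = h ` {a..b}"
  have MS: "Metric_space M (\<lambda>u v. dist (f u) (f v))"
    unfolding Metric_space_def M_def
    by (auto simp: dist_commute fh dist_triangle)
  define Z where "Z = metric (M, \<lambda>u v. dist (f u) (f v))"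
  have mZ: "mspace Z = M" and dZ: "mdist Z = (\<lambda>u v. dist (f u) (f v))"
    using MS by (auto simp: Z_def Metric_space.mspace_metric Metric_space.mdist_metric)
  obtain B where B: "\<forall>x\<in>mspace X. \<forall>y\<in>mspace X. dist (f x) (f y) \<le> B * mdist X x y"
    using L unfolding Lipschitz_continuous_map_def by auto
  have Lg: "Lipschitz_continuous_map (submetric X (mspace X)) Z (h \<circ> f)"
    unfolding Lipschitz_continuous_map_def
  proof (intro conjI)
    have fx: "f x \<in> {a..b}" if "x \<in> mspace X" for x using that im by blast
    show "h \<circ> f \<in> mspace (submetric X (mspace X)) \<rightarrow> mspace Z"
      using fx by (auto simp: mZ M_def)
    show "\<exists>B. \<forall>x\<in>mspace (submetric X (mspace X)). \<forall>y\<in>mspace (submetric X (mspace X)).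
       mdist Z ((h \<circ> f) x) ((h \<circ> f) y) \<le> B * mdist (submetric X (mspace X)) x y"
      using fx B by (auto simp: dZ fh intro!: exI[of _ B])
  qed
  have gim: "(h \<circ> f) ` mspace X = M"
    using im by (metis M_def image_comp)
  have "trind_le_zero (subtopology (mtopology_of Z) M)"
    using H Lg gim unfolding tHD_eq_zero_def by (metis order_refl)
  moreover have "subtopology (mtopology_of Z) M = mtopology_of Z"
    by (metis mZ subtopology_topspace topspace_mtopology_of)
  ultimately have T1: "ind_le_shift (mtopology_of Z) 1"
    by (simp add: trind_le_zero_def)
  have Lh: "Lipschitz_continuous_map (submetric euclidean_metric {a..b}) Z h"
    unfolding Lipschitz_continuous_map_def
    by (auto simp: mZ dZ M_def fh intro!: exI[of _ 1])
  have "connectedin (mtopology_of Z) (h ` {a..b})"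
    apply (rule connectedin_continuous_map_image[OF Lipschitz_continuous_imp_continuous_map[OF Lh]])
    by (simp add: mtopology_of_submetric)
  then have conn: "connected_space (mtopology_of Z)"
    by (metis M_def connectedin_topspace mZ topspace_mtopology_of)
  have haM: "h a \<in> topspace (mtopology_of Z)" using ab by (simp add: mZ M_def)
  define U where "U = mball_of Z (h a) ((b-a)/2)"
  have oU: "openin (mtopology_of Z) U"
    by (simp add: U_def mball_of_def mtopology_of_def Metric_space.openin_mball)
  have aU: "h a \<in> U"
  proof -
    have "mdist Z (h a) (h a) = 0" unfolding dZ by simp
    moreover have "h a \<in> mspace Z" using haM by simp
    ultimately show ?thesis unfolding U_def in_mball_of using ab by (simp del: mdist_zero)
  qed
  obtain V where V: "openin (mtopology_of Z) V" "h a \<in> V" "V \<subseteq> U"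
     "ind_le_shift (subtopology (mtopology_of Z) (mtopology_of Z frontier_of V)) 0"
  proof -
    have "\<forall>x \<in> topspace (mtopology_of Z). \<forall>U. openin (mtopology_of Z) U \<and> x \<in> U \<longrightarrow>
        (\<exists>V. openin (mtopology_of Z) V \<and> x \<in> V \<and> V \<subseteq> U \<and>
             ind_le_shift (subtopology (mtopology_of Z) (mtopology_of Z frontier_of V)) 0)"
      using T1 unfolding One_nat_def by (simp only: ind_le_shift.simps(2))
    then have "\<forall>U. openin (mtopology_of Z) U \<and> h a \<in> U \<longrightarrow>
        (\<exists>V. openin (mtopology_of Z) V \<and> h a \<in> V \<and> V \<subseteq> U \<and>
             ind_le_shift (subtopology (mtopology_of Z) (mtopology_of Z frontier_of V)) 0)"
      using haM by (rule bspec)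
    then have "openin (mtopology_of Z) U \<and> h a \<in> U \<longrightarrow>
        (\<exists>V. openin (mtopology_of Z) V \<and> h a \<in> V \<and> V \<subseteq> U \<and>
             ind_le_shift (subtopology (mtopology_of Z) (mtopology_of Z frontier_of V)) 0)"
      by (rule spec)
    then have "\<exists>V. openin (mtopology_of Z) V \<and> h a \<in> V \<and> V \<subseteq> U \<and>
             ind_le_shift (subtopology (mtopology_of Z) (mtopology_of Z frontier_of V)) 0"
      using oU aU by (rule mp[OF _ conjI])
    then obtain V' where "openin (mtopology_of Z) V'" "h a \<in> V'" "V' \<subseteq> U"
             "ind_le_shift (subtopology (mtopology_of Z) (mtopology_of Z frontier_of V')) 0"
      by (elim exE conjE)
    then show ?thesis by (rule that)
  qed
  have "mtopology_of Z frontier_of V = {}"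
  proof -
    have "topspace (subtopology (mtopology_of Z) (mtopology_of Z frontier_of V)) = {}"
      using V(4) by (simp only: ind_le_shift.simps(1))
    then show ?thesis by (metis frontier_of_subset_topspace inf.absorb2 topspace_subtopology)
  qed
  then have "closedin (mtopology_of Z) V"
    using frontier_of_eq_empty[OF openin_subset[OF V(1)]] by simp
  then have "V = {} \<or> V = topspace (mtopology_of Z)"
    using conn V(1) unfolding connected_space_clopen_in by simp
  then have "V = topspace (mtopology_of Z)" using V(2) by auto
  moreover have "h b \<in> topspace (mtopology_of Z)" using ab by (simp add: mZ M_def)
  moreover have "h b \<notin> U"
  proof -
    have "mdist Z (h a) (h b) = b - a" unfolding dZ using ab fh by (simp add: dist_real_def)
    then have "\<not> mdist Z (h a) (h b) < (b-a)/2" using ab by (simp add: field_simps)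
    then show ?thesis unfolding U_def in_mball_of by blast
  qed
  ultimately show False using V(3) by blast
qed

lemma gap:
  fixes X :: "'a metric" and Z :: "'b metric"
  assumes noonto: "\<not> (\<exists>(f :: 'a \<Rightarrow> real) a b. a < b \<and>
          Lipschitz_continuous_map X euclidean_metric f \<and> f ` mspace X = {a..b})"
    and Y: "Y \<subseteq> mspace X" and gY: "g ` Y \<subseteq> mspace Z"
    and B: "B > 0" "\<forall>x\<in>Y. \<forall>y\<in>Y. mdist Z (g x) (g y) \<le> B * mdist X x y"
    and y0: "y0 \<in> Y" and r: "r > 0"
  shows "\<exists>s. 0 < s \<and> s < r \<and> (\<forall>y\<in>Y. mdist Z (g y0) (g y) \<noteq> s)"
proof (rule ccontr)
  assume "\<not> ?thesis"
  then have hit: "\<And>s. 0 < s \<Longrightarrow> s < r \<Longrightarrow> \<exists>y\<in>Y. mdist Z (g y0) (g y) = s" by blast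
  define \<phi> where "\<phi> y = mdist Z (g y0) (g y)" for y
  define \<psi> where "\<psi> p = Inf ((\<lambda>y. \<phi> y + B * mdist X p y) ` Y)" for p
  define F where "F p = max 0 (min (r/2) (\<psi> p))" for p
  have bdd: "bdd_below ((\<lambda>y. \<phi> y + B * mdist X p y) ` Y)" for p
    unfolding bdd_below_def \<phi>_def using B(1)
    by (intro exI[of _ 0]) auto
  have ne: "(\<lambda>y. \<phi> y + B * mdist X p y) ` Y \<noteq> {}" for p using y0 by auto
  have lower: "\<psi> p \<le> \<phi> y + B * mdist X p y" if "y \<in> Y" for p y
    unfolding \<psi>_def using that bdd by (intro cInf_lower) auto
  have lip: "\<psi> p \<le> \<psi> q + B * mdist X p q" if "p \<in> mspace X" "q \<in> mspace X" for p q
  proof -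
    have "\<psi> p - B * mdist X p q \<le> \<psi> q"
      unfolding \<psi>_def[of q]
    proof (rule cInf_greatest[OF ne])
      fix t assume "t \<in> (\<lambda>y. \<phi> y + B * mdist X q y) ` Y"
      then obtain y where y: "y \<in> Y" "t = \<phi> y + B * mdist X q y" by auto
      have "mdist X p y \<le> mdist X p q + mdist X q y"
        using that y Y by (intro mdist_triangle) auto
      then have "B * mdist X p y \<le> B * mdist X p q + B * mdist X q y"
        using B(1) by (metis distrib_left mult_left_mono less_imp_le)
      then show "\<psi> p - B * mdist X p q \<le> t" using lower[OF y(1), of p] y(2) by linarith
    qed
    then show ?thesis by linarith
  qed
  have onY: "\<psi> y = \<phi> y" if "y \<in> Y" for y
  proof (rule antisym)
    have "mdist X y y = 0" using that Y by auto
    then show "\<psi> y \<le> \<phi> y" using lower[OF that, of y] by simp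
    show "\<phi> y \<le> \<psi> y"
      unfolding \<psi>_def
    proof (rule cInf_greatest[OF ne])
      fix t assume "t \<in> (\<lambda>y'. \<phi> y' + B * mdist X y y') ` Y"
      then obtain y' where y': "y' \<in> Y" "t = \<phi> y' + B * mdist X y y'" by auto
      have "\<phi> y \<le> \<phi> y' + mdist Z (g y') (g y)"
        unfolding \<phi>_def using gY y' that y0 by (intro mdist_triangle) auto
      also have "\<dots> \<le> \<phi> y' + B * mdist X y y'"
        using B(2) y' that by (simp add: mdist_commute)
      finally show "\<phi> y \<le> t" using y' by simp
    qed
  qed
  have FL: "Lipschitz_continuous_map X euclidean_metric F"
    unfolding Lipschitz_continuous_map_def
  proof (intro conjI exI[of _ B] ballI)
    show "F \<in> mspace X \<rightarrow> mspace euclidean_metric" by simp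
    fix p q assume pq: "p \<in> mspace X" "q \<in> mspace X"
    have "\<psi> p \<le> \<psi> q + B * mdist X p q" "\<psi> q \<le> \<psi> p + B * mdist X p q"
      using lip[OF pq] lip[OF pq(2,1)] by (auto simp: mdist_commute)
    then show "mdist euclidean_metric (F p) (F q) \<le> B * mdist X p q"
      unfolding F_def by (auto simp: dist_real_def max_def min_def)
  qed
  have "F ` mspace X = {0..r/2}"
  proof
    show "F ` mspace X \<subseteq> {0..r/2}" using r by (auto simp: F_def)
    show "{0..r/2} \<subseteq> F ` mspace X"
    proof
      fix t assume t: "t \<in> {0..r/2}"
      have "\<exists>y\<in>Y. \<phi> y = t"
      proof (cases "t = 0")
        case True
        then show ?thesis using y0 gY unfolding \<phi>_def by (intro bexI[of _ y0]) auto
      next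
        case False
        then show ?thesis using hit[of t] t r unfolding \<phi>_def by auto
      qed
      then obtain y where y: "y \<in> Y" "\<phi> y = t" by blast
      have "F y = t" using onY[OF y(1)] y(2) t by (simp add: F_def)
      then show "t \<in> F ` mspace X" using y Y by force
    qed
  qed
  then show False using noonto FL r by (metis half_gt_zero)
qed

lemma part3:
  fixes X :: "'a metric" and Z :: "'b metric"
  assumes noonto: "\<not> (\<exists>(f :: 'a \<Rightarrow> real) a b. a < b \<and>
          Lipschitz_continuous_map X euclidean_metric f \<and> f ` mspace X = {a..b})"
    and Y: "Y \<subseteq> mspace X" and Lg: "Lipschitz_continuous_map (submetric X Y) Z g"
  shows "trind_le_zero (subtopology (mtopology_of Z) (g ` Y))"
proof -
  have mY: "mspace (submetric X Y) = Y" using Y by auto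
  obtain B where B: "B > 0" "\<forall>x\<in>Y. \<forall>y\<in>Y. mdist Z (g x) (g y) \<le> B * mdist X x y"
    using Lg unfolding Lipschitz_continuous_map_pos mY by auto
  have gY: "g ` Y \<subseteq> mspace Z" using Lg unfolding Lipschitz_continuous_map_def mY by auto
  define T where "T = subtopology (mtopology_of Z) (g ` Y)"
  have tT: "topspace T = g ` Y" using gY by (auto simp: T_def)
  have "ind_le_shift T (Suc 0)"
    unfolding ind_le_shift.simps(2)
  proof (intro ballI allI impI, elim conjE)
    fix x U assume x: "x \<in> topspace T" and U: "openin T U" "x \<in> U"
    obtain y0 where y0: "y0 \<in> Y" "x = g y0" using x tT by auto
    obtain W where W: "openin (mtopology_of Z) W" "U = W \<inter> g ` Y"
      using U(1) unfolding T_def openin_subtopology by auto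
    have xW: "x \<in> W" using U W by auto
    obtain r where r: "r > 0" "mball_of Z x r \<subseteq> W"
      using W(1) xW unfolding mtopology_of_def mball_of_def Metric_space.openin_mtopology[OF Metric_space_mspace_mdist]
      by blast
    obtain s where s: "0 < s" "s < r" "\<forall>y\<in>Y. mdist Z (g y0) (g y) \<noteq> s"
      using gap[OF noonto Y gY B y0(1) r(1)] by blast
    define V where "V = mball_of Z x s \<inter> g ` Y"
    have oV: "openin T V"
      unfolding T_def V_def openin_subtopology
      by (intro exI[of _ "mball_of Z x s"]) (simp add: mtopology_of_def mball_of_def Metric_space.openin_mball)
    have V2: "V = mcball_of Z x s \<inter> g ` Y"
      using s y0 gY unfolding V_def by (auto simp: less_le)
    have cV: "closedin T V"
      unfolding T_def V2 closedin_subtopology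
      by (intro exI[of _ "mcball_of Z x s"]) (simp add: mtopology_of_def mcball_of_def Metric_space.closedin_mcball)
    have "T frontier_of V = {}"
      using frontier_of_eq_empty[OF openin_subset[OF oV]] oV cV by simp
    moreover have "x \<in> V"
    proof -
      have "x \<in> mspace Z" using y0 gY by auto
      then have "mdist Z x x = 0" by simp
      then show ?thesis using s y0 gY unfolding V_def by auto
    qed
    moreover have "V \<subseteq> U" using r s W unfolding V_def by auto
    ultimately show "\<exists>V. openin T V \<and> x \<in> V \<and> V \<subseteq> U \<and>
             ind_le_shift (subtopology T (T frontier_of V)) 0"
      using oV by (intro exI[of _ V]) simp
  qed
  then show ?thesis unfolding trind_le_zero_def T_def by simp
qed

theorem lemma4p6:
  fixes X :: "'a metric"
  assumes "mspace X \<noteq> {}"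
  shows "tHD_eq_zero X \<longleftrightarrow>
    \<not> (\<exists>(f :: 'a \<Rightarrow> real) a b. a < b \<and>
          Lipschitz_continuous_map X euclidean_metric f \<and> f ` mspace X = {a..b})"
proof
  assume "tHD_eq_zero X"
  then show "\<not> (\<exists>(f :: 'a \<Rightarrow> real) a b. a < b \<and>
          Lipschitz_continuous_map X euclidean_metric f \<and> f ` mspace X = {a..b})"
    using part2 by blast
next
  assume N: "\<not> (\<exists>(f :: 'a \<Rightarrow> real) a b. a < b \<and>
          Lipschitz_continuous_map X euclidean_metric f \<and> f ` mspace X = {a..b})"
  obtain x0 where x0: "x0 \<in> mspace X" using assms by blast
  have L0: "Lipschitz_continuous_map (submetric X {x0}) X (\<lambda>x. x)"
    by (rule Lipschitz_continuous_map_from_submetric[OF Lipschitz_continuous_map_id])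
  have "trind_le_zero (subtopology (mtopology_of X) ((\<lambda>x. x) ` {x0}))"
    using part3[OF N _ L0] x0 by blast
  moreover have "\<not> ind_le_shift (subtopology (mtopology_of X) ((\<lambda>x. x) ` {x0})) 0"
    using x0 by simp
  ultimately have E: "trind_eq_zero (subtopology (mtopology_of X) ((\<lambda>x. x) ` {x0}))"
    unfolding trind_eq_zero_def by blast
  show "tHD_eq_zero X"
    unfolding tHD_eq_zero_def
  proof (intro conjI allI impI)
    fix Y and Z :: "'a metric" and f :: "'a \<Rightarrow> 'a"
    assume "Y \<subseteq> mspace X \<and> Lipschitz_continuous_map (submetric X Y) Z f"
    then show "trind_le_zero (subtopology (mtopology_of Z) (f ` Y))"
      using part3[OF N] by blast
  next
    show "\<exists>Y (Z :: 'a metric) (f :: 'a \<Rightarrow> 'a). Y \<subseteq> mspace X \<and> Lipschitz_continuous_map (submetric X Y) Z f \<and>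
        trind_eq_zero (subtopology (mtopology_of Z) (f ` Y))"
      using x0 L0 E by blast
  qed
qed

end
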